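(* For every combinatorial auction with nonempty winner set $W$, the BLO outcome $\pi^{BLO}$ and any MRC outcome $\pi^{MRC}$ satisfy $$\sum_{i\in N}\pi^{BLO}_i\ \ge\ \frac{4}{|W|+2+\frac{|W|\bmod 2}{|W|}}\ \sum_{i\in N}\pi^{MRC}_i .$$ The bound is tight: for every integer $k\ge1$ there is a combinatorial auction with $|W|=k$ and $\sum_i\pi^{MRC}_i>0$ for which equality holds.
   Context: A combinatorial auction (CA) has a finite set of bidders $N=\{1,\dots,n\}$, a finite set of items $M$, and for each bidder $i$ a valuation $v_i:2^M\to\mathbb{R}_{\ge 0}$ with $v_i(\emptyset)=0$ (bids are assumed equal to true valuations). For $S\subseteq N$ let $w(S)=\max\{\sum_{i\in S}v_i(a_i): a_i\subseteq M,\ a_i\cap a_j=\emptyset\ (i\ne j)\}$ (with $w(\emptyset)=0$). Fix an allocation $(a^*_i)_{i\in N}$ attaining $w(N)$; the winner set is $W=\{i: a^*_i\neq\emptyset\}$. The core is $U=\{\pi\in\mathbb{R}^N:\ \pi_i\ge 0\ \forall i\in N,\ \sum_{i\in N\setminus S}\pi_i\le w(N)-w(S)\ \forall S\subseteq N\}$. An MRC outcome is a $\pi\in U$ maximizing $\sum_{i\in N}\pi_i$ over $U$. For $x,y\in\mathbb{R}^n$, $x$ leximin-dominates $y$ if, writing $x_{(1)}\le\dots\le x_{(n)}$ and $y_{(1)}\le\dots\le y_{(n)}$ for the sorted entries, there is $0\le k\le n-1$ with $x_{(j)}=y_{(j)}$ for $j\le k$ and $x_{(k+1)}>y_{(k+1)}$.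 The BLO outcome $\pi^{BLO}$ is the (unique) $\pi\in U$ not leximin-dominated by any $\pi'\in U$. *)

theory Defs
  imports Complex_Main
begin

text \<open>Payment vectors in R^N are functions nat => real that vanish outside N.\<close>

definition bidders :: "nat \<Rightarrow> nat set" where
  "bidders n = {1..n}"

definition is_CA :: "nat \<Rightarrow> 'm set \<Rightarrow> (nat \<Rightarrow> 'm set \<Rightarrow> real) \<Rightarrow> bool" where
  "is_CA n M v \<longleftrightarrow> finite M \<and>
     (\<forall>i\<in>bidders n. v i {} = 0 \<and> (\<forall>S\<subseteq>M. v i S \<ge> 0))"

definition feasible :: "'m set \<Rightarrow> nat set \<Rightarrow> (nat \<Rightarrow> 'm set) \<Rightarrow> bool" where
  "feasible M S a \<longleftrightarrow> (\<forall>i\<in>S. a i \<subseteq> M) \<and> (\<forall>i\<in>S. \<forall>j\<in>S. i \<noteq> j \<longrightarrow> a i \<inter> a j = {})"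

definition wval :: "'m set \<Rightarrow> (nat \<Rightarrow> 'm set \<Rightarrow> real) \<Rightarrow> nat set \<Rightarrow> real" where
  "wval M v S = Max {(\<Sum>i\<in>S. v i (a i)) | a. feasible M S a}"

definition opt_alloc :: "nat \<Rightarrow> 'm set \<Rightarrow> (nat \<Rightarrow> 'm set \<Rightarrow> real) \<Rightarrow> (nat \<Rightarrow> 'm set) \<Rightarrow> bool" where
  "opt_alloc n M v a \<longleftrightarrow> feasible M (bidders n) a \<and>
     (\<Sum>i\<in>bidders n. v i (a i)) = wval M v (bidders n)"

definition winners :: "nat \<Rightarrow> (nat \<Rightarrow> 'm set) \<Rightarrow> nat set" where
  "winners n a = {i\<in>bidders n. a i \<noteq> {}}"

definition core :: "nat \<Rightarrow> 'm set \<Rightarrow> (nat \<Rightarrow> 'm set \<Rightarrow> real) \<Rightarrow> (nat \<Rightarrow> real) set" where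
  "core n M v = {\<pi>. (\<forall>i. i \<notin> bidders n \<longrightarrow> \<pi> i = 0) \<and>
       (\<forall>i\<in>bidders n. \<pi> i \<ge> 0) \<and>
       (\<forall>S\<subseteq>bidders n. (\<Sum>i\<in>bidders n - S. \<pi> i) \<le> wval M v (bidders n) - wval M v S)}"

definition is_MRC :: "nat \<Rightarrow> 'm set \<Rightarrow> (nat \<Rightarrow> 'm set \<Rightarrow> real) \<Rightarrow> (nat \<Rightarrow> real) \<Rightarrow> bool" where
  "is_MRC n M v \<pi> \<longleftrightarrow> \<pi> \<in> core n M v \<and>
     (\<forall>\<pi>'\<in>core n M v. (\<Sum>i\<in>bidders n. \<pi>' i) \<le> (\<Sum>i\<in>bidders n. \<pi> i))"

definition sorted_entries :: "nat \<Rightarrow> (nat \<Rightarrow> real) \<Rightarrow> real list" where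
  "sorted_entries n x = sort (map x [1..<n+1])"

definition leximin_dominates :: "nat \<Rightarrow> (nat \<Rightarrow> real) \<Rightarrow> (nat \<Rightarrow> real) \<Rightarrow> bool" where
  "leximin_dominates n x y \<longleftrightarrow>
     (\<exists>k<n. (\<forall>j<k. sorted_entries n x ! j = sorted_entries n y ! j) \<and>
            sorted_entries n x ! k > sorted_entries n y ! k)"

definition is_BLO :: "nat \<Rightarrow> 'm set \<Rightarrow> (nat \<Rightarrow> 'm set \<Rightarrow> real) \<Rightarrow> (nat \<Rightarrow> real) \<Rightarrow> bool" where
  "is_BLO n M v \<pi> \<longleftrightarrow> \<pi> \<in> core n M v \<and>
     \<not> (\<exists>\<pi>'\<in>core n M v. leximin_dominates n \<pi>' \<pi>)"

definition blo_factor :: "nat \<Rightarrow> real" where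
  "blo_factor k = 4 / (real k + 2 + real (k mod 2) / real k)"

end

theory Submission
  imports Defs "HOL-Library.Multiset" "HOL-Library.FuncSet"
begin

lemma wset_finite:
  assumes "finite S" "finite M"
  shows "finite {(\<Sum>i\<in>S. v i (a i)) | a. feasible M S a}"
proof -
  have "{(\<Sum>i\<in>S. v i (a i)) | a. feasible M S a} \<subseteq> (\<lambda>a. \<Sum>i\<in>S. v i (a i)) ` (PiE S (\<lambda>_. Pow M))"
  proof
    fix z assume "z \<in> {(\<Sum>i\<in>S. v i (a i)) | a. feasible M S a}"
    then obtain a where a: "feasible M S a" "z = (\<Sum>i\<in>S. v i (a i))" by blast
    have "restrict a S \<in> PiE S (\<lambda>_. Pow M)" using a(1) unfolding feasible_def by auto
    moreover have "z = (\<Sum>i\<in>S. v i (restrict a S i))" using a(2) by simp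
    ultimately show "z \<in> (\<lambda>a. \<Sum>i\<in>S. v i (a i)) ` (PiE S (\<lambda>_. Pow M))" by blast
  qed
  moreover have "finite (PiE S (\<lambda>_. Pow M))" using assms by (simp add: finite_PiE)
  ultimately show ?thesis using finite_subset by blast
qed

lemma wval_ge:
  assumes "finite S" "finite M" "feasible M S a"
  shows "(\<Sum>i\<in>S. v i (a i)) \<le> wval M v S"
  unfolding wval_def using wset_finite[OF assms(1,2), of v] assms(3)
  by (intro Max_ge) auto

lemma wval_le:
  assumes "finite S" "finite M" "\<And>a. feasible M S a \<Longrightarrow> (\<Sum>i\<in>S. v i (a i)) \<le> B"
  shows "wval M v S \<le> B"
proof -
  have "feasible M S (\<lambda>_. {})" unfolding feasible_def by auto
  then show ?thesis unfolding wval_def using wset_finite[OF assms(1,2), of v] assms(3)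
    by (subst Max_le_iff) auto
qed

lemma finite_bidders[simp]: "finite (bidders n)" unfolding bidders_def by simp

lemma core_zero:
  assumes "is_CA n M v" "opt_alloc n M v a" "\<pi> \<in> core n M v" "i \<in> bidders n" "v i (a i) = 0"
  shows "\<pi> i = 0"
proof -
  let ?N = "bidders n"
  have fin: "finite M" using assms(1) unfolding is_CA_def by simp
  have c: "(\<Sum>j\<in>?N - (?N - {i}). \<pi> j) \<le> wval M v ?N - wval M v (?N - {i})"
    using assms(3) unfolding core_def by blast
  have e: "?N - (?N - {i}) = {i}" using assms(4) by auto
  have feas: "feasible M (?N - {i}) a" using assms(2) unfolding opt_alloc_def feasible_def by auto
  have "(\<Sum>j\<in>?N - {i}. v j (a j)) \<le> wval M v (?N - {i})"
    by (rule wval_ge[OF _ fin feas]) simp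
  moreover have "(\<Sum>j\<in>?N. v j (a j)) = v i (a i) + (\<Sum>j\<in>?N - {i}. v j (a j))"
    using assms(4) by (simp add: sum.remove)
  moreover have "(\<Sum>j\<in>?N. v j (a j)) = wval M v ?N" using assms(2) unfolding opt_alloc_def by simp
  ultimately have "\<pi> i \<le> 0" using c e assms(5) by simp
  moreover have "\<pi> i \<ge> 0" using assms(3,4) unfolding core_def by blast
  ultimately show ?thesis by simp
qed

lemma sorted_nth_le_count:
  fixes L :: "real list"
  assumes "sorted L" "c < length L" "length (filter (\<lambda>z. z \<le> s) L) > c"
  shows "L ! c \<le> s"
proof (rule ccontr)
  assume "\<not> L ! c \<le> s"
  then have "\<forall>i. c \<le> i \<and> i < length L \<longrightarrow> \<not> L ! i \<le> s"
    using assms(1) by (meson order_trans sorted_nth_mono)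
  then have "{i. i < length L \<and> L ! i \<le> s} \<subseteq> {..<c}"
    by (auto simp: not_le[symmetric] intro: ccontr)
  then have "card {i. i < length L \<and> L ! i \<le> s} \<le> c"
    by (metis card_lessThan card_mono finite_lessThan)
  then show False using assms(3) by (simp add: length_filter_conv_card)
qed

lemma sorted_nth_less_count:
  fixes L :: "real list"
  assumes "sorted L" "c < length L" "length (filter (\<lambda>z. z < s) L) > c"
  shows "L ! c < s"
proof (rule ccontr)
  assume "\<not> L ! c < s"
  then have "\<forall>i. c \<le> i \<and> i < length L \<longrightarrow> \<not> L ! i < s"
    using assms(1) by (meson order_less_le_trans sorted_nth_mono not_less)
  then have "{i. i < length L \<and> L ! i < s} \<subseteq> {..<c}"
    by (auto simp: not_le[symmetric] intro: ccontr)
  then have "card {i. i < length L \<and> L ! i < s} \<le> c"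
    by (metis card_lessThan card_mono finite_lessThan)
  then show False using assms(3) by (simp add: length_filter_conv_card)
qed

lemma sorted_nth_ge_count:
  fixes L :: "real list"
  assumes "sorted L" "c < length L" "length (filter (\<lambda>z. z < s) L) \<le> c"
  shows "L ! c \<ge> s"
proof (rule ccontr)
  assume "\<not> L ! c \<ge> s"
  then have "\<forall>i. i \<le> c \<longrightarrow> L ! i < s"
    using assms by (meson le_less_trans not_le sorted_nth_mono)
  then have "{..c} \<subseteq> {i. i < length L \<and> L ! i < s}" using assms(2) by force
  moreover have "finite {i. i < length L \<and> L ! i < s}" by simp
  ultimately have "card {..c} \<le> card {i. i < length L \<and> L ! i < s}"
    by (rule card_mono[rotated])
  then have "c + 1 \<le> card {i. i < length L \<and> L ! i < s}" by simp
  then show False using assms(3) by (simp add: length_filter_conv_card)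
qed

lemma len_filter_map_idx:
  "length (filter P (map f [1..<n+1])) = card {i\<in>bidders n. P (f i)}"
proof -
  have "length (filter P (map f [1..<n+1])) = length (filter (P \<circ> f) [1..<n+1])"
    by (simp add: filter_map)
  also have "\<dots> = card ({i. (P \<circ> f) i} \<inter> set [1..<n+1])" by (simp add: distinct_length_filter)
  also have "{i. (P \<circ> f) i} \<inter> set [1..<n+1] = {i\<in>bidders n. P (f i)}"
    unfolding bidders_def by auto
  finally show ?thesis .
qed

lemma sort_split:
  fixes A B :: "real list"
  assumes "mset L = mset A + mset B" "\<forall>a\<in>set A. \<forall>b\<in>set B. a \<le> b"
  shows "sort L = sort A @ sort B"
  by (rule properties_for_sort) (use assms in \<open>auto simp: sorted_append\<close>)


lemma mset_map_split:
  "mset (map f xs) = mset (map f (filter P xs)) + mset (map f (filter (\<lambda>i. \<not> P i) xs))"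
  by (induction xs) auto

lemma sorted_hd_le:
  fixes B :: "real list"
  assumes "z \<in> set B"
  shows "sort B ! 0 \<le> z"
proof -
  have "z \<in> set (sort B)" using assms by simp
  then obtain t where t: "t < length (sort B)" "sort B ! t = z" by (meson in_set_conv_nth)
  have "sort B ! 0 \<le> sort B ! t" by (rule sorted_nth_mono) (use t in auto)
  then show ?thesis using t by simp
qed

lemma sorted_hd_mem:
  fixes B :: "real list"
  assumes "B \<noteq> []"
  shows "sort B ! 0 \<in> set B"
proof -
  have "length (sort B) > 0" using assms by simp
  then have "sort B ! 0 \<in> set (sort B)" by (rule nth_mem)
  then show ?thesis by simp
qed

lemma tight_exists:
  assumes CA: "is_CA n M v" and BLO: "is_BLO n M v x" and j: "j \<in> bidders n"
  shows "\<exists>S\<subseteq>bidders n. j \<notin> S \<and> (\<Sum>i\<in>bidders n - S. x i) = wval M v (bidders n) - wval M v S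
           \<and> (\<forall>l\<in>bidders n - S. x l \<le> x j)"
proof (rule ccontr)
  assume H: "\<not> ?thesis"
  define N where "N = bidders n"
  define wN where "wN = wval M v N"
  have xc: "x \<in> core n M v" using BLO unfolding is_BLO_def by simp
  have x0: "\<And>i. i \<notin> N \<Longrightarrow> x i = 0" using xc unfolding core_def N_def by blast
  have xpos: "\<And>i. i \<in> N \<Longrightarrow> x i \<ge> 0" using xc unfolding core_def N_def by blast
  have xle: "\<And>S. S \<subseteq> N \<Longrightarrow> (\<Sum>i\<in>N - S. x i) \<le> wN - wval M v S"
    using xc unfolding core_def N_def wN_def by blast
  have finN: "finite N" unfolding N_def by simp
  define \<theta> where "\<theta> = x j"
  have jN: "j \<in> N" using j N_def by simp
  have th0: "\<theta> \<ge> 0" using xpos jN \<theta>_def by simp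
  define G where "G = {l\<in>N. x l > \<theta>}"
  define SL where "SL = (\<lambda>S. wN - wval M v S - (\<Sum>i\<in>N - S. x i)) ` {S. S \<subseteq> N \<and> j \<notin> S \<and> (\<Sum>i\<in>N - S. x i) < wN - wval M v S}"
  define GAP where "GAP = (\<lambda>l. (x l - \<theta>) / 2) ` G"
  define \<epsilon> where "\<epsilon> = Min (insert 1 (SL \<union> GAP))"
  have finSL: "finite SL" unfolding SL_def using finN by (auto intro: finite_subset[of _ "Pow N"])
  have finGAP: "finite GAP" unfolding GAP_def G_def using finN by simp
  have epos: "\<epsilon> > 0"
    unfolding \<epsilon>_def using finSL finGAP
    by (subst Min_gr_iff) (auto simp: SL_def GAP_def G_def)
  have eSL: "\<epsilon> \<le> wN - wval M v S - (\<Sum>i\<in>N - S. x i)"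
    if "S \<subseteq> N" "j \<notin> S" "(\<Sum>i\<in>N - S. x i) < wN - wval M v S" for S
    unfolding \<epsilon>_def using finSL finGAP that by (intro Min_le) (auto simp: SL_def)
  have eG: "\<epsilon> \<le> (x l - \<theta>) / 2" if "l \<in> G" for l
    unfolding \<epsilon>_def using finSL finGAP that by (intro Min_le) (auto simp: GAP_def)
  define y where "y = (\<lambda>i. x i + (if i = j then \<epsilon> else 0) - (if i \<in> G then \<epsilon> else 0))"
  have jG: "j \<notin> G" unfolding G_def \<theta>_def by simp
  have sumy: "(\<Sum>i\<in>A. y i) = (\<Sum>i\<in>A. x i) + (if j \<in> A then \<epsilon> else 0) - \<epsilon> * card (A \<inter> G)"
    if "finite A" for A
  proof -
    have "(\<Sum>i\<in>A. y i) = (\<Sum>i\<in>A. x i) + (\<Sum>i\<in>A. if i = j then \<epsilon> else 0) - (\<Sum>i\<in>A. if i \<in> G then \<epsilon> else 0)"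
      unfolding y_def by (simp add: sum.distrib sum_subtractf)
    also have "(\<Sum>i\<in>A. if i = j then \<epsilon> else 0) = (if j \<in> A then \<epsilon> else 0)"
      using that by (simp add: sum.delta)
    also have "(\<Sum>i\<in>A. if i \<in> G then \<epsilon> else 0) = (\<Sum>i\<in>A \<inter> G. \<epsilon>)"
      by (subst sum.inter_restrict[OF that]) simp
    also have "\<dots> = \<epsilon> * card (A \<inter> G)" by simp
    finally show ?thesis .
  qed
  have ycore: "y \<in> core n M v"
    unfolding core_def
  proof (intro CollectI conjI ballI allI impI)
    fix i assume "i \<notin> bidders n"
    then have "i \<notin> N" "i \<noteq> j" "i \<notin> G" using jN unfolding N_def G_def by auto
    then show "y i = 0" unfolding y_def using x0 by simp
  next
    fix i assume "i \<in> bidders n"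
    then have iN: "i \<in> N" unfolding N_def .
    show "y i \<ge> 0"
    proof (cases "i \<in> G")
      case True
      then have "i \<noteq> j" using jG by auto
      moreover have "\<epsilon> \<le> (x i - \<theta>) / 2" using eG True by simp
      moreover have "x i > \<theta>" using True G_def by simp
      ultimately show ?thesis unfolding y_def using th0 True by simp
    next
      case False
      then show ?thesis unfolding y_def using xpos[OF iN] epos by simp
    qed
  next
    fix S assume SN: "S \<subseteq> bidders n"
    then have SN': "S \<subseteq> N" unfolding N_def .
    have fS: "finite (N - S)" using finN by simp
    have sy: "(\<Sum>i\<in>N - S. y i) = (\<Sum>i\<in>N - S. x i) + (if j \<in> N - S then \<epsilon> else 0) - \<epsilon> * card ((N - S) \<inter> G)"
      by (rule sumy[OF fS])
    have "(\<Sum>i\<in>N - S. y i) \<le> wN - wval M v S"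
    proof (cases "j \<in> S")
      case True
      have "\<epsilon> * card ((N - S) \<inter> G) \<ge> 0" using epos by simp
      then show ?thesis using sy xle[OF SN'] True by simp
    next
      case jS: False
      show ?thesis
      proof (cases "(\<Sum>i\<in>N - S. x i) < wN - wval M v S")
        case True
        have "\<epsilon> * card ((N - S) \<inter> G) \<ge> 0" using epos by simp
        then show ?thesis using sy eSL[OF SN' jS True] jS jN by simp
      next
        case False
        then have eq: "(\<Sum>i\<in>N - S. x i) = wN - wval M v S" using xle[OF SN'] by simp
        then obtain l where l: "l \<in> N - S" "\<not> x l \<le> x j"
          using H SN jS unfolding N_def wN_def by blast
        then have "l \<in> (N - S) \<inter> G" unfolding G_def \<theta>_def by auto
        then have "card ((N - S) \<inter> G) \<ge> 1"
          using finN by (metis One_nat_def Suc_leI card_gt_0_iff emptyE finite_Diff finite_Int)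
        then have "\<epsilon> * card ((N - S) \<inter> G) \<ge> \<epsilon>" using epos by simp
        then show ?thesis using sy eq jS SN' jN by simp
      qed
    qed
    then show "(\<Sum>i\<in>bidders n - S. y i) \<le> wval M v (bidders n) - wval M v S"
      unfolding N_def wN_def .
  qed
  define idx where "idx = [1..<n+1]"
  have setidx: "set idx = N" unfolding idx_def N_def bidders_def by auto
  define P where "P = (\<lambda>i. i \<noteq> j \<and> x i \<le> \<theta>)"
  define A where "A = map x (filter P idx)"
  define Bx where "Bx = map x (filter (\<lambda>i. \<not> P i) idx)"
  define By where "By = map y (filter (\<lambda>i. \<not> P i) idx)"
  have Ay: "map y (filter P idx) = A"
    unfolding A_def y_def P_def G_def by (auto intro!: map_cong)
  have sx: "sorted_entries n x = sort A @ sort Bx"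
    unfolding sorted_entries_def idx_def[symmetric]
  proof (rule sort_split)
    show "mset (map x idx) = mset A + mset Bx" unfolding A_def Bx_def by (rule mset_map_split)
    show "\<forall>a\<in>set A. \<forall>b\<in>set Bx. a \<le> b"
      unfolding A_def Bx_def P_def \<theta>_def by force
  qed
  have sy: "sorted_entries n y = sort A @ sort By"
    unfolding sorted_entries_def idx_def[symmetric]
  proof (rule sort_split)
    show "mset (map y idx) = mset A + mset By" unfolding Ay[symmetric] By_def by (rule mset_map_split)
    have "a \<le> \<theta>" if "a \<in> set A" for a using that unfolding A_def P_def by auto
    moreover have "b > \<theta>" if "b \<in> set By" for b
    proof -
      obtain i where i: "i \<in> set idx" "\<not> P i" "b = y i" using \<open>b \<in> set By\<close> unfolding By_def by auto
      show ?thesis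
      proof (cases "i = j")
        case True then show ?thesis using i epos jG unfolding y_def \<theta>_def by simp
      next
        case False
        then have "x i > \<theta>" using i(2) P_def by simp
        then have iG: "i \<in> G" using i(1) setidx G_def by simp
        then show ?thesis using i False eG[OF iG] \<open>x i > \<theta>\<close> unfolding y_def by simp
      qed
    qed
    ultimately show "\<forall>a\<in>set A. \<forall>b\<in>set By. a \<le> b" by force
  qed
  have jB: "j \<in> set (filter (\<lambda>i. \<not> P i) idx)" using jN setidx P_def by simp
  have Bxne: "Bx \<noteq> []" using jB unfolding Bx_def by (metis empty_iff list.map_disc_iff list.set(1))
  have Byne: "By \<noteq> []" using jB unfolding By_def by (metis empty_iff list.map_disc_iff list.set(1))
  have lenx: "length (sorted_entries n x) = n" unfolding sorted_entries_def by simp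
  have r_lt: "length A < n" using lenx sx Bxne by (simp add: length_greater_0_conv[symmetric] del: length_greater_0_conv)
  have dom: "leximin_dominates n y x"
    unfolding leximin_dominates_def
  proof (intro exI[of _ "length A"] conjI allI impI)
    show "length A < n" by (rule r_lt)
    fix t assume "t < length A"
    then show "sorted_entries n y ! t = sorted_entries n x ! t"
      unfolding sx sy by (simp add: nth_append)
  next
    have "sorted_entries n x ! length A = sort Bx ! 0" unfolding sx by (simp add: nth_append)
    also have "\<dots> \<le> \<theta>" by (rule sorted_hd_le) (use jB in \<open>auto simp: Bx_def \<theta>_def\<close>)
    finally have 1: "sorted_entries n x ! length A \<le> \<theta>" .
    have "sorted_entries n y ! length A = sort By ! 0" unfolding sy by (simp add: nth_append)
    moreover have "sort By ! 0 \<in> set By" by (rule sorted_hd_mem[OF Byne])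
    moreover have "b > \<theta>" if "b \<in> set By" for b
    proof -
      obtain i where i: "i \<in> set idx" "\<not> P i" "b = y i" using \<open>b \<in> set By\<close> unfolding By_def by auto
      show ?thesis
      proof (cases "i = j")
        case True then show ?thesis using i epos jG unfolding y_def \<theta>_def by simp
      next
        case False
        then have "x i > \<theta>" using i(2) P_def by simp
        then have iG: "i \<in> G" using i(1) setidx G_def by simp
        then show ?thesis using i False eG[OF iG] \<open>x i > \<theta>\<close> unfolding y_def by simp
      qed
    qed
    ultimately show "sorted_entries n y ! length A > sorted_entries n x ! length A" using 1 by force
  qed
  then show False using BLO ycore unfolding is_BLO_def by blast
qed


lemma indep_cover_gen:
  fixes x :: "'a \<Rightarrow> real"
  assumes finW: "finite W" and TW: "\<T> \<subseteq> Pow W"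
    and good: "\<forall>i\<in>W. \<exists>T\<in>\<T>. i \<in> T \<and> (\<forall>l\<in>T. x l \<le> x i)"
  shows "U \<subseteq> W \<Longrightarrow> \<exists>J f. J \<subseteq> U \<and> (\<forall>j\<in>J. f j \<in> \<T> \<and> j \<in> f j \<and> (\<forall>l\<in>f j. x l \<le> x j))
           \<and> U \<subseteq> (\<Union>j\<in>J. f j) \<and> (\<forall>j\<in>J. \<forall>j'\<in>J. j \<noteq> j' \<longrightarrow> j' \<notin> f j)"
proof (induction "card U" arbitrary: U rule: less_induct)
  case less
  show ?case
  proof (cases "U = {}")
    case True
    then show ?thesis by (intro exI[of _ "{}"]) auto
  next
    case Une: False
    have finU: "finite U" by (rule finite_subset[OF less.prems finW])
    define \<theta> where "\<theta> = Max (x ` U)"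
    define E where "E = {u\<in>U. x u = \<theta>}"
    have "\<theta> \<in> x ` U" unfolding \<theta>_def using finU Une by (intro Max_in) auto
    then have Ene: "E \<noteq> {}" unfolding E_def by auto
    have xle: "\<And>u. u \<in> U \<Longrightarrow> x u \<le> \<theta>" unfolding \<theta>_def using finU by simp
    have EU: "E \<subseteq> U" unfolding E_def by auto
    define C0 where "C0 = {T\<in>\<T>. (\<forall>l\<in>T. x l \<le> \<theta>) \<and> T \<inter> E \<noteq> {}}"
    define cov where "cov = (\<lambda>\<C>. \<C> \<subseteq> C0 \<and> E \<subseteq> \<Union>\<C>)"
    have "cov C0"
      unfolding cov_def
    proof (intro conjI subsetI)
      fix e assume "e \<in> E"
      then have eW: "e \<in> W" using EU less.prems by auto
      obtain T where T: "T \<in> \<T>" "e \<in> T" "\<forall>l\<in>T. x l \<le> x e" using good eW by blast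
      have "x e = \<theta>" using \<open>e \<in> E\<close> E_def by simp
      then have "T \<in> C0" unfolding C0_def using T \<open>e \<in> E\<close> by auto
      then show "e \<in> \<Union>C0" using T by auto
    qed simp
    then obtain \<C> where C: "cov \<C>" and Cmin: "\<And>\<C>'. cov \<C>' \<Longrightarrow> card \<C> \<le> card \<C>'"
      using ex_has_least_nat[of cov C0 card] by blast
    have finPW: "finite (Pow W)" using finW by simp
    have C0T: "C0 \<subseteq> \<T>" unfolding C0_def by auto
    have "\<C> \<subseteq> Pow W" using C C0T TW unfolding cov_def by (meson order_trans)
    then have finC: "finite \<C>" using finPW by (rule finite_subset)
    have priv: "\<exists>p. p \<in> E \<inter> C \<and> (\<forall>C'\<in>\<C>. C' \<noteq> C \<longrightarrow> p \<notin> C')" if CC: "C \<in> \<C>" for C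
    proof (rule ccontr)
      assume np: "\<nexists>p. p \<in> E \<inter> C \<and> (\<forall>C'\<in>\<C>. C' \<noteq> C \<longrightarrow> p \<notin> C')"
      have "cov (\<C> - {C})"
        unfolding cov_def
      proof (intro conjI subsetI)
        fix e assume eE: "e \<in> E"
        then obtain C'' where "C'' \<in> \<C>" "e \<in> C''" using C unfolding cov_def by blast
        then show "e \<in> \<Union>(\<C> - {C})"
        proof (cases "C'' = C")
          case True
          then show ?thesis using np eE \<open>e \<in> C''\<close> by blast
        next
          case False
          then show ?thesis using \<open>C'' \<in> \<C>\<close> \<open>e \<in> C''\<close> by blast
        qed
      next
        fix T assume "T \<in> \<C> - {C}" then show "T \<in> C0" using C unfolding cov_def by blast
      qed
      then have "card \<C> \<le> card (\<C> - {C})" by (rule Cmin)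
      moreover have "card (\<C> - {C}) < card \<C>" using finC CC by (meson card_Diff1_less)
      ultimately show False by simp
    qed
    define rep where "rep = (\<lambda>C. SOME p. p \<in> E \<inter> C \<and> (\<forall>C'\<in>\<C>. C' \<noteq> C \<longrightarrow> p \<notin> C'))"
    have rep: "rep C \<in> E \<inter> C \<and> (\<forall>C'\<in>\<C>. C' \<noteq> C \<longrightarrow> rep C \<notin> C')" if "C \<in> \<C>" for C
      unfolding rep_def by (rule someI_ex) (rule priv[OF that])
    have injrep: "inj_on rep \<C>"
    proof (rule inj_onI)
      fix C C' assume CC: "C \<in> \<C>" "C' \<in> \<C>" "rep C = rep C'"
      show "C = C'"
      proof (rule ccontr)
        assume "C \<noteq> C'"
        then have "rep C \<notin> C'" using rep[OF CC(1)] CC(2) by blast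
        moreover have "rep C' \<in> C'" using rep[OF CC(2)] by blast
        ultimately show False using CC(3) by simp
      qed
    qed
    define U' where "U' = U - \<Union>\<C>"
    have "U' \<subset> U" unfolding U'_def using Ene EU C unfolding cov_def by blast
    then have cardU': "card U' < card U" using finU by (rule psubset_card_mono[rotated])
    have U'W: "U' \<subseteq> W" using less.prems U'_def by auto
    obtain J' f' where IH: "J' \<subseteq> U'" "\<forall>j\<in>J'. f' j \<in> \<T> \<and> j \<in> f' j \<and> (\<forall>l\<in>f' j. x l \<le> x j)"
      "U' \<subseteq> (\<Union>j\<in>J'. f' j)" "\<forall>j\<in>J'. \<forall>j'\<in>J'. j \<noteq> j' \<longrightarrow> j' \<notin> f' j"
      using less.hyps[OF cardU' U'W] by blast
    define J where "J = J' \<union> rep ` \<C>"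
    define f where "f = (\<lambda>j. if j \<in> J' then f' j else inv_into \<C> rep j)"
    have frep: "f (rep C) = C" if "C \<in> \<C>" for C
    proof -
      have "rep C \<in> \<Union>\<C>" using rep[OF that] that by blast
      then have "rep C \<notin> J'" using IH(1) U'_def by blast
      then show ?thesis unfolding f_def using injrep that by simp
    qed
    have Cgood: "C \<in> \<T> \<and> (\<forall>l\<in>C. x l \<le> \<theta>)" if "C \<in> \<C>" for C
      using that C unfolding cov_def C0_def by blast
    have repth: "x (rep C) = \<theta>" if "C \<in> \<C>" for C using rep[OF that] E_def by simp
    have P1: "J \<subseteq> U"
      proof
        fix j assume "j \<in> J"
        then consider "j \<in> J'" | C where "C \<in> \<C>" "j = rep C" unfolding J_def by blast
        then show "j \<in> U"
        proof cases
          case 1 then show ?thesis using IH(1) U'_def by blast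
        next
          case 2 then have "j \<in> E" using rep[OF 2(1)] by simp
          then show ?thesis using EU by blast
        qed
      qed
    have P2: "\<forall>j\<in>J. f j \<in> \<T> \<and> j \<in> f j \<and> (\<forall>l\<in>f j. x l \<le> x j)"
    proof
      fix j assume "j \<in> J"
      then consider "j \<in> J'" | C where "C \<in> \<C>" "j = rep C" unfolding J_def by blast
      then show "f j \<in> \<T> \<and> j \<in> f j \<and> (\<forall>l\<in>f j. x l \<le> x j)"
      proof cases
        case 1 then show ?thesis using IH(2) f_def by simp
      next
        case 2 then show ?thesis using frep Cgood repth rep by auto
      qed
    qed
    have P3: "U \<subseteq> (\<Union>j\<in>J. f j)"
    proof
      fix u assume uU: "u \<in> U"
      show "u \<in> (\<Union>j\<in>J. f j)"
      proof (cases "u \<in> \<Union>\<C>")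
        case True
        then obtain C where "C \<in> \<C>" "u \<in> C" by blast
        then show ?thesis using frep[OF \<open>C \<in> \<C>\<close>] unfolding J_def by (intro UN_I[of "rep C"]) auto
      next
        case False
        then have "u \<in> U'" using uU U'_def by simp
        then obtain j where "j \<in> J'" "u \<in> f' j" using IH(3) by blast
        then show ?thesis unfolding J_def f_def by (intro UN_I[of j]) auto
      qed
    qed
    have P4: "\<forall>j\<in>J. \<forall>j'\<in>J. j \<noteq> j' \<longrightarrow> j' \<notin> f j"
    proof (intro ballI impI)
    fix j j' assume jJ: "j \<in> J" and j'J: "j' \<in> J" and ne: "j \<noteq> j'"
    show "j' \<notin> f j"
    proof (cases "j \<in> J'")
      case jJ': True
      show ?thesis
      proof (cases "j' \<in> J'")
        case True then show ?thesis using IH(4) jJ' ne f_def by simp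
      next
        case False
        then obtain C where C': "C \<in> \<C>" "j' = rep C" using j'J J_def by blast
        have "j \<in> U'" using IH(1) jJ' by blast
        then have jU: "j \<in> U" and jn: "j \<notin> \<Union>\<C>" unfolding U'_def by auto
        then have "j \<notin> E" using C unfolding cov_def by blast
        then have "x j \<noteq> \<theta>" using jU E_def by simp
        then have "x j < \<theta>" using xle[OF jU] by simp
        moreover have "x j' = \<theta>" using repth C' by simp
        moreover have "f j = f' j" using jJ' f_def by simp
        moreover have "\<forall>l\<in>f' j. x l \<le> x j" using IH(2) jJ' by blast
        ultimately show ?thesis by force
      qed
    next
      case False
      then obtain C where C1: "C \<in> \<C>" "j = rep C" using jJ J_def by blast
      then have fj: "f j = C" using frep by simp
      show ?thesis
      proof (cases "j' \<in> J'")
        case True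
        then have "j' \<in> U'" using IH(1) by blast
        then show ?thesis using fj C1 U'_def by blast
      next
        case False
        then obtain C' where C2: "C' \<in> \<C>" "j' = rep C'" using j'J J_def by blast
        then have "C' \<noteq> C" using ne C1 by blast
        then show ?thesis using rep[OF C2(1)] C1 C2 fj by blast
      qed
    qed
    qed
    show ?thesis by (rule exI[of _ J], rule exI[of _ f], intro conjI P1 P2 P3 P4)
  qed
qed


lemma arith_bound:
  fixes p k :: nat
  assumes "1 \<le> p" "p \<le> k"
  shows "4 * real p * (real k - real p + 1) \<le> real k ^ 2 + 2 * real k + real (k mod 2)"
proof (cases "even k")
  case True
  then obtain m where m: "k = 2 * m" by blast
  have km: "k mod 2 = 0" using True by simp
  have prod: "(real p - real m) * (real p - real m - 1) \<ge> 0"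
  proof (cases "p \<le> m")
    case True
    then show ?thesis by (intro mult_nonpos_nonpos) auto
  next
    case False
    then show ?thesis by (intro mult_nonneg_nonneg) auto
  qed
  have eq: "4 * real p * (real k - real p + 1) = real k ^ 2 + 2 * real k - 4 * ((real p - real m) * (real p - real m - 1))"
    unfolding m by (simp add: algebra_simps power2_eq_square)
  show ?thesis using eq prod km by simp
next
  case False
  then obtain m where m: "k = 2 * m + 1" using oddE by blast
  have km: "k mod 2 = 1" using False by presburger
  have eq: "4 * real p * (real k - real p + 1) = real k ^ 2 + 2 * real k + 1 - 4 * (real m + 1 - real p)^2"
    unfolding m by (simp add: algebra_simps power2_eq_square)
  show ?thesis using eq km by simp
qed

lemma cover_bound:
  fixes x \<pi> :: "'a \<Rightarrow> real"
  assumes finW: "finite W" and Wne: "W \<noteq> {}" and xpos: "\<forall>i\<in>W. x i \<ge> 0"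
    and ppos: "\<forall>i\<in>W. \<pi> i \<ge> 0" and TW: "\<T> \<subseteq> Pow W"
    and tight: "\<forall>T\<in>\<T>. sum \<pi> T \<le> sum x T"
    and good: "\<forall>i\<in>W. \<exists>T\<in>\<T>. i \<in> T \<and> (\<forall>l\<in>T. x l \<le> x i)"
  shows "blo_factor (card W) * sum \<pi> W \<le> sum x W"
proof -
  obtain J f where J: "J \<subseteq> W" "\<forall>j\<in>J. f j \<in> \<T> \<and> j \<in> f j \<and> (\<forall>l\<in>f j. x l \<le> x j)"
      "W \<subseteq> (\<Union>j\<in>J. f j)" "\<forall>j\<in>J. \<forall>j'\<in>J. j \<noteq> j' \<longrightarrow> j' \<notin> f j"
    using indep_cover_gen[OF finW TW good, of W] by blast
  have finJ: "finite J" by (rule finite_subset[OF J(1) finW])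
  have fW: "f j \<subseteq> W" if "j \<in> J" for j using J(2) that TW by blast
  define k where "k = card W"
  define p where "p = card J"
  define B where "B = W - J"
  have finB: "finite B" using finW B_def by simp
  have kpos: "k \<ge> 1" using Wne finW k_def by (simp add: Suc_le_eq card_gt_0_iff)
  have Jne: "J \<noteq> {}" using J(3) Wne by blast
  have p1: "p \<ge> 1" using Jne finJ p_def by (simp add: Suc_le_eq card_gt_0_iff)
  have pk: "p \<le> k" unfolding p_def k_def using J(1) finW by (rule card_mono[rotated])
  have cardB: "card B = k - p" unfolding B_def k_def p_def using J(1) finW
    by (simp add: card_Diff_subset finite_subset)
  define rk rp rq where "rk = real k" and "rp = real p" and "rq = real (k - p)"
  have rkpq: "rk = rp + rq" unfolding rk_def rp_def rq_def using pk by simp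
  have s1: "sum \<pi> W \<le> (\<Sum>j\<in>J. sum \<pi> (f j))"
  proof -
    have "sum \<pi> W \<le> (\<Sum>i\<in>W. \<Sum>j\<in>J. if i \<in> f j then \<pi> i else 0)"
    proof (rule sum_mono)
      fix i assume iW: "i \<in> W"
      then obtain j0 where j0: "j0 \<in> J" "i \<in> f j0" using J(3) by blast
      have "(if i \<in> f j0 then \<pi> i else 0) \<le> (\<Sum>j\<in>J. if i \<in> f j then \<pi> i else 0)"
        by (rule member_le_sum) (use j0 finJ ppos iW in auto)
      then show "\<pi> i \<le> (\<Sum>j\<in>J. if i \<in> f j then \<pi> i else 0)" using j0 by simp
    qed
    also have "\<dots> = (\<Sum>j\<in>J. \<Sum>i\<in>W. if i \<in> f j then \<pi> i else 0)" by (rule sum.swap)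
    also have "\<dots> = (\<Sum>j\<in>J. sum \<pi> (f j))"
    proof (rule sum.cong[OF refl])
      fix j assume "j \<in> J"
      have "(\<Sum>i\<in>W. if i \<in> f j then \<pi> i else 0) = sum \<pi> (W \<inter> f j)"
        by (rule sum.inter_restrict[OF finW, symmetric])
      also have "W \<inter> f j = f j" using fW[OF \<open>j \<in> J\<close>] by blast
      finally show "(\<Sum>i\<in>W. if i \<in> f j then \<pi> i else 0) = sum \<pi> (f j)" .
    qed
    finally show ?thesis .
  qed
  have s2: "(\<Sum>j\<in>J. sum \<pi> (f j)) \<le> (\<Sum>j\<in>J. sum x (f j))"
    by (rule sum_mono) (use J(2) tight in blast)
  have s3j: "rk * sum x (f j) \<le> rk * x j + (rq * (rp - 1) * x j + (rq + 1) * sum x B)" if jJ: "j \<in> J" for j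
  proof -
    have finf: "finite (f j)" by (rule finite_subset[OF fW[OF jJ] finW])
    have jin: "j \<in> f j" using J(2) jJ by blast
    have e1: "sum x (f j) = x j + sum x (f j - {j})" by (rule sum.remove[OF finf jin])
    have e2: "sum x (f j - {j}) = (\<Sum>i\<in>f j - {j}. min (x i) (x j))"
      by (rule sum.cong[OF refl]) (use J(2) jJ in auto)
    have e3: "(\<Sum>i\<in>f j - {j}. min (x i) (x j)) \<le> (\<Sum>i\<in>B. min (x i) (x j))"
    proof (rule sum_mono2[OF finB])
      show "f j - {j} \<subseteq> B"
      proof
        fix i assume i: "i \<in> f j - {j}"
        then have i1: "i \<in> f j" and i2: "j \<noteq> i" by auto
        have iW: "i \<in> W" by (rule subsetD[OF fW[OF jJ] i1])
        have iJ: "i \<notin> J"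
        proof
          assume "i \<in> J"
          then have "i \<notin> f j" using J(4)[rule_format, OF jJ _ i2] by simp
          then show False using i1 by simp
        qed
        show "i \<in> B" unfolding B_def using iW iJ by simp
      qed
      show "\<And>b. b \<in> B - (f j - {j}) \<Longrightarrow> 0 \<le> min (x b) (x j)"
        using xpos J(1) jJ B_def by auto
    qed
    have e4: "rk * (\<Sum>i\<in>B. min (x i) (x j)) \<le> (\<Sum>i\<in>B. (rp - 1) * x j + (rq + 1) * x i)"
    proof -
      have "rk * (\<Sum>i\<in>B. min (x i) (x j)) = (\<Sum>i\<in>B. rk * min (x i) (x j))" by (simp add: sum_distrib_left)
      also have "\<dots> \<le> (\<Sum>i\<in>B. (rp - 1) * x j + (rq + 1) * x i)"
      proof (rule sum_mono)
        fix i assume "i \<in> B"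
        have a: "(rp - 1) * min (x i) (x j) \<le> (rp - 1) * x j"
          using p1 rp_def by (intro mult_left_mono) auto
        have b: "(rq + 1) * min (x i) (x j) \<le> (rq + 1) * x i"
          using rq_def by (intro mult_left_mono) auto
        have "rk * min (x i) (x j) = (rp - 1) * min (x i) (x j) + (rq + 1) * min (x i) (x j)"
          using rkpq by (simp add: algebra_simps)
        then show "rk * min (x i) (x j) \<le> (rp - 1) * x j + (rq + 1) * x i" using a b by simp
      qed
      finally show ?thesis .
    qed
    have e5: "(\<Sum>i\<in>B. (rp - 1) * x j + (rq + 1) * x i) = rq * (rp - 1) * x j + (rq + 1) * sum x B"
      using cardB rq_def by (simp add: sum.distrib sum_distrib_left)
    have rk0: "rk \<ge> 0" using rk_def by simp
    have e6: "rk * sum x (f j) = rk * x j + rk * (\<Sum>i\<in>f j - {j}. min (x i) (x j))"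
      unfolding e1 e2 by (simp add: distrib_left)
    have e7: "rk * (\<Sum>i\<in>f j - {j}. min (x i) (x j)) \<le> rk * (\<Sum>i\<in>B. min (x i) (x j))"
      by (rule mult_left_mono[OF e3 rk0])
    show ?thesis using e4 e5 e6 e7 by linarith
  qed
  have s3: "rk * (\<Sum>j\<in>J. sum x (f j)) \<le> rp * (rq + 1) * sum x W"
  proof -
    have "rk * (\<Sum>j\<in>J. sum x (f j)) = (\<Sum>j\<in>J. rk * sum x (f j))" by (simp add: sum_distrib_left)
    also have "\<dots> \<le> (\<Sum>j\<in>J. rk * x j + (rq * (rp - 1) * x j + (rq + 1) * sum x B))"
      by (rule sum_mono) (rule s3j)
    also have "\<dots> = (\<Sum>j\<in>J. (rk + rq * (rp - 1)) * x j + (rq + 1) * sum x B)"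
      by (rule sum.cong[OF refl]) (simp add: algebra_simps)
    also have "\<dots> = (\<Sum>j\<in>J. (rk + rq * (rp - 1)) * x j) + (\<Sum>j\<in>J. (rq + 1) * sum x B)"
      by (rule sum.distrib)
    also have "\<dots> = (rk + rq * (rp - 1)) * sum x J + rp * ((rq + 1) * sum x B)"
      unfolding p_def rp_def by (simp add: sum_distrib_left[symmetric])
    also have "\<dots> = (rk + rq * (rp - 1)) * sum x J + rp * (rq + 1) * sum x B" by simp
    also have "rk + rq * (rp - 1) = rp * (rq + 1)" using rkpq by (simp add: algebra_simps)
    also have "rp * (rq + 1) * sum x J + rp * (rq + 1) * sum x B = rp * (rq + 1) * sum x W"
    proof -
      have "sum x W = sum x J + sum x B" unfolding B_def using J(1) finW
        using sum.subset_diff[OF J(1) finW, of x] by simp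
      then show ?thesis by (simp add: algebra_simps)
    qed
    finally show ?thesis .
  qed
  have X0: "sum x W \<ge> 0" using xpos by (simp add: sum_nonneg)
  have main: "rk * sum \<pi> W \<le> rp * (rq + 1) * sum x W"
  proof -
    have "rk * sum \<pi> W \<le> rk * (\<Sum>j\<in>J. sum x (f j))"
      using s1 s2 rk_def by (intro mult_left_mono) auto
    then show ?thesis using s3 by simp
  qed
  define D where "D = rk ^ 2 + 2 * rk + real (k mod 2)"
  have ab: "4 * rp * (rq + 1) \<le> D"
    using arith_bound[OF p1 pk] unfolding D_def rp_def rk_def rq_def using pk by (simp add: of_nat_diff)
  have rkpos: "rk > 0" using kpos rk_def by simp
  have Dpos: "D > 0" unfolding D_def using rkpos by (simp add: add_pos_nonneg)
  have bf: "blo_factor k = 4 * rk / D"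
  proof -
    have "rk + 2 + real (k mod 2) / rk = D / rk" unfolding D_def using rkpos
      by (simp add: field_simps power2_eq_square)
    then show ?thesis unfolding blo_factor_def rk_def[symmetric] using rkpos Dpos by simp
  qed
  have "4 * rk * sum \<pi> W \<le> 4 * (rp * (rq + 1) * sum x W)" using main by simp
  also have "\<dots> = (4 * rp * (rq + 1)) * sum x W" by simp
  also have "\<dots> \<le> D * sum x W" using ab X0 by (rule mult_right_mono)
  finally have "4 * rk * sum \<pi> W \<le> D * sum x W" .
  then have "4 * rk * sum \<pi> W / D \<le> sum x W" using Dpos by (simp add: divide_le_eq mult.commute)
  then show ?thesis unfolding k_def[symmetric] bf by simp
qed


lemma part1:
  assumes CA: "is_CA n M v" and opt: "opt_alloc n M v a" and Wne: "winners n a \<noteq> {}"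
    and BLO: "is_BLO n M v x" and MRC: "is_MRC n M v \<pi>"
  shows "blo_factor (card (winners n a)) * (\<Sum>i\<in>bidders n. \<pi> i) \<le> (\<Sum>i\<in>bidders n. x i)"
proof -
  define N where "N = bidders n"
  define W where "W = winners n a"
  have WN: "W \<subseteq> N" unfolding W_def N_def winners_def by auto
  have finN: "finite N" unfolding N_def by simp
  have finW: "finite W" by (rule finite_subset[OF WN finN])
  have xc: "x \<in> core n M v" using BLO unfolding is_BLO_def by simp
  have pc: "\<pi> \<in> core n M v" using MRC unfolding is_MRC_def by simp
  have loser: "v i (a i) = 0" if "i \<in> N - W" for i
  proof -
    have "a i = {}" "i \<in> bidders n" using that unfolding W_def N_def winners_def by auto
    then show ?thesis using CA unfolding is_CA_def by simp
  qed
  have x0: "x i = 0" if "i \<in> N - W" for i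
    using core_zero[OF CA opt xc _ loser[OF that]] that N_def by simp
  have p0: "\<pi> i = 0" if "i \<in> N - W" for i
    using core_zero[OF CA opt pc _ loser[OF that]] that N_def by simp
  have xpos: "\<forall>i\<in>W. x i \<ge> 0" using xc WN unfolding core_def N_def by blast
  have ppos: "\<forall>i\<in>W. \<pi> i \<ge> 0" using pc WN unfolding core_def N_def by blast
  have redx: "sum x A = sum x (A \<inter> W)" if "A \<subseteq> N" for A
  proof (rule sum.mono_neutral_right)
    show "finite A" by (rule finite_subset[OF that finN])
    show "A \<inter> W \<subseteq> A" by (rule Int_lower1)
    show "\<forall>i\<in>A - A \<inter> W. x i = 0"
    proof
      fix i assume "i \<in> A - A \<inter> W"
      then have "i \<in> N - W" using that by auto
      then show "x i = 0" by (rule x0)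
    qed
  qed
  have redp: "sum \<pi> A = sum \<pi> (A \<inter> W)" if "A \<subseteq> N" for A
  proof (rule sum.mono_neutral_right)
    show "finite A" by (rule finite_subset[OF that finN])
    show "A \<inter> W \<subseteq> A" by (rule Int_lower1)
    show "\<forall>i\<in>A - A \<inter> W. \<pi> i = 0"
    proof
      fix i assume "i \<in> A - A \<inter> W"
      then have "i \<in> N - W" using that by auto
      then show "\<pi> i = 0" by (rule p0)
    qed
  qed
  define \<T> where "\<T> = {(N - S) \<inter> W | S. S \<subseteq> N \<and> (\<Sum>i\<in>N - S. x i) = wval M v N - wval M v S}"
  have TW: "\<T> \<subseteq> Pow W" unfolding \<T>_def by auto
  have tight: "\<forall>T\<in>\<T>. sum \<pi> T \<le> sum x T"
  proof
    fix T assume "T \<in> \<T>"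
    then obtain S where S: "T = (N - S) \<inter> W" "S \<subseteq> N" "(\<Sum>i\<in>N - S. x i) = wval M v N - wval M v S"
      unfolding \<T>_def by blast
    have "sum \<pi> (N - S) \<le> wval M v N - wval M v S" using pc S(2) unfolding core_def N_def by blast
    then show "sum \<pi> T \<le> sum x T" using S redx[of "N - S"] redp[of "N - S"] by auto
  qed
  have good: "\<forall>i\<in>W. \<exists>T\<in>\<T>. i \<in> T \<and> (\<forall>l\<in>T. x l \<le> x i)"
  proof
    fix i assume iW: "i \<in> W"
    then have "i \<in> bidders n" using WN N_def by auto
    then have "\<exists>S\<subseteq>N. i \<notin> S \<and> (\<Sum>l\<in>N - S. x l) = wval M v N - wval M v S
           \<and> (\<forall>l\<in>N - S. x l \<le> x i)" unfolding N_def by (rule tight_exists[OF CA BLO])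
    then obtain S where S: "S \<subseteq> N" "i \<notin> S" "(\<Sum>l\<in>N - S. x l) = wval M v N - wval M v S"
      "\<forall>l\<in>N - S. x l \<le> x i" by (elim exE conjE)
    have "(N - S) \<inter> W \<in> \<T>" unfolding \<T>_def
      by (rule CollectI, rule exI[of _ S]) (use S in simp)
    moreover have "i \<in> (N - S) \<inter> W" using iW S WN by auto
    ultimately show "\<exists>T\<in>\<T>. i \<in> T \<and> (\<forall>l\<in>T. x l \<le> x i)"
      using S(4) by (intro bexI[of _ "(N - S) \<inter> W"]) auto
  qed
  have "blo_factor (card W) * sum \<pi> W \<le> sum x W"
    by (rule cover_bound[OF finW _ xpos ppos TW tight good]) (use Wne W_def in simp)
  moreover have "sum x N = sum x W" using redx[of N] WN by (simp add: Int_absorb1)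
  moreover have "sum \<pi> N = sum \<pi> W" using redp[of N] WN by (simp add: Int_absorb1)
  ultimately show ?thesis unfolding N_def W_def by simp
qed


lemma sum_if_card:
  assumes "finite A"
  shows "(\<Sum>i\<in>A. if i \<in> X then (c::real) else 0) = c * card (A \<inter> X)"
proof -
  have "(\<Sum>i\<in>A. if i \<in> X then c else 0) = (\<Sum>i\<in>A \<inter> X. c)"
    by (subst sum.inter_restrict[OF assms]) simp
  then show ?thesis by simp
qed

lemma price_bound:
  fixes u :: "nat \<Rightarrow> real" and p :: "'m \<Rightarrow> real"
  assumes "finite S" "finite M" "feasible M S al"
    and "\<And>i. i \<in> S \<Longrightarrow> v i (al i) \<le> u i + sum p (al i)"
    and "\<And>t. t \<in> M \<Longrightarrow> p t \<ge> 0"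
  shows "(\<Sum>i\<in>S. v i (al i)) \<le> sum u S + sum p M"
proof -
  have sub: "\<And>i. i \<in> S \<Longrightarrow> al i \<subseteq> M" using assms(3) unfolding feasible_def by blast
  have finA: "\<And>i. i \<in> S \<Longrightarrow> finite (al i)" by (rule finite_subset[OF sub assms(2)])
  have "(\<Sum>i\<in>S. v i (al i)) \<le> (\<Sum>i\<in>S. u i + sum p (al i))" by (rule sum_mono) (rule assms(4))
  also have "\<dots> = sum u S + (\<Sum>i\<in>S. sum p (al i))" by (simp add: sum.distrib)
  also have "(\<Sum>i\<in>S. sum p (al i)) = sum p (\<Union>(al ` S))"
    by (rule sum.UNION_disjoint[symmetric])
       (use assms(1,2,3) finA in \<open>auto simp: feasible_def\<close>)
  also have "\<dots> \<le> sum p M"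
    by (rule sum_mono2) (use assms(2,5) sub in auto)
  finally show ?thesis by simp
qed

lemma count_se:
  "length (filter P (sorted_entries n f)) = card {i\<in>bidders n. P (f i)}"
proof -
  have "length (filter P (sorted_entries n f)) = length (filter P (map f [1..<n+1]))"
    unfolding sorted_entries_def by (metis mset_filter mset_sort size_mset)
  also have "\<dots> = card {i\<in>bidders n. P (f i)}" by (rule len_filter_map_idx)
  finally show ?thesis .
qed

lemma len_se[simp]: "length (sorted_entries n f) = n"
  unfolding sorted_entries_def by simp

lemma sorted_se[simp]: "sorted (sorted_entries n f)"
  unfolding sorted_entries_def by simp

lemma se_nonneg:
  assumes "\<forall>i\<in>bidders n. f i \<ge> 0" "t < n"
  shows "sorted_entries n f ! t \<ge> 0"
proof -
  have "sorted_entries n f ! t \<in> set (sorted_entries n f)" using assms(2) by simp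
  then show ?thesis using assms(1) unfolding sorted_entries_def bidders_def by auto
qed

lemma aux_lin: "(1 - (m::real)) * 1 \<le> (1 - m) * c \<Longrightarrow> 1 \<le> m + (1 - m) * c" by (simp add: algebra_simps)

definition hh :: "nat \<Rightarrow> nat" where "hh k = (k - 1) div 2"
definition vv :: "nat \<Rightarrow> nat \<Rightarrow> nat set \<Rightarrow> real" where
  "vv k i A = (if i \<in> {1..k} then (if i \<in> A then 1 else 0)
     else if i - k \<in> {hh k + 1..k} \<and> {1..hh k} \<union> {i - k} \<subseteq> A then real (hh k) else 0)"
definition aa :: "nat \<Rightarrow> nat \<Rightarrow> nat set" where "aa k i = (if i \<in> {1..k} then {i} else {})"
definition xB :: "nat \<Rightarrow> nat \<Rightarrow> real" where "xB k i = (if i \<in> {1..k} then 1 / real (hh k + 1) else 0)"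
definition xM :: "nat \<Rightarrow> nat \<Rightarrow> real" where "xM k i = (if i \<in> {hh k + 1..k} then 1 else 0)"

context
  fixes k :: nat
  assumes k1: "k \<ge> 1"
begin

abbreviation "h \<equiv> hh k"
abbreviation "m \<equiv> 1 / real (hh k + 1)"
abbreviation "N \<equiv> bidders (2 * k)"
abbreviation "Wn \<equiv> {1..k}"
abbreviation "Bs \<equiv> {hh k + 1..k}"
abbreviation "Hs \<equiv> {1..hh k}"

lemma hk: "h < k" using k1 unfolding hh_def by linarith

lemma WnN: "Wn \<subseteq> N" unfolding bidders_def by auto

lemma card_Wn_N: "card (N \<inter> Wn) = k" using WnN by (simp add: Int_absorb1)

lemma m_props: "m > 0" "m \<le> 1" "(1 - m) * real (h + 1) = real h" "real (h + 1) * m = 1"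
  by (auto simp: field_simps)

lemma loser_card:
  assumes "i \<notin> Wn" "i - k \<in> Bs" "Hs \<union> {i - k} \<subseteq> A" "finite A"
  shows "card A \<ge> h + 1"
proof -
  have "i - k \<notin> Hs" using assms(2) by auto
  then have "card (Hs \<union> {i - k}) = h + 1" by simp
  then show ?thesis using card_mono[OF assms(4,3)] by simp
qed

lemma wS_le_B:
  assumes "S \<subseteq> N"
  shows "wval Wn (vv k) S \<le> m * card (S \<inter> Wn) + (1 - m) * k"
proof (rule wval_le)
  show "finite S" by (rule finite_subset[OF assms finite_bidders])
  show "finite Wn" by simp
  fix al assume feas: "feasible Wn S al"
  have "(\<Sum>i\<in>S. vv k i (al i)) \<le> (\<Sum>i\<in>S. if i \<in> Wn then m else 0) + (\<Sum>t\<in>Wn. 1 - m)"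
  proof (rule price_bound[OF \<open>finite S\<close> _ feas])
    fix i assume iS: "i \<in> S"
    have sub: "al i \<subseteq> Wn" using feas iS unfolding feasible_def by blast
    have fin: "finite (al i)" by (rule finite_subset[OF sub]) simp
    have sp: "sum (\<lambda>t. 1 - m) (al i) = (1 - m) * card (al i)" by simp
    show "vv k i (al i) \<le> (if i \<in> Wn then m else 0) + sum (\<lambda>t. 1 - m) (al i)"
    proof (cases "i \<in> Wn")
      case True
      show ?thesis
      proof (cases "i \<in> al i")
        case True
        then have "card (al i) \<ge> 1" using fin by (metis One_nat_def Suc_leI card_gt_0_iff empty_iff)
        then have c: "(1 - m) * card (al i) \<ge> (1 - m) * 1" using m_props by (intro mult_left_mono) auto
        have v1: "vv k i (al i) = 1" using \<open>i \<in> Wn\<close> True unfolding vv_def by simp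
        have ifm: "(if i \<in> Wn then m else 0) = m" using \<open>i \<in> Wn\<close> by simp
        have "vv k i (al i) \<le> m + (1 - m) * card (al i)" by (subst v1) (rule aux_lin[OF c])
        then show ?thesis by (simp only: ifm sp)
      next
        case False
        then show ?thesis using \<open>i \<in> Wn\<close> sp m_props unfolding vv_def by simp
      qed
    next
      case nW: False
      show ?thesis
      proof (cases "i - k \<in> Bs \<and> Hs \<union> {i - k} \<subseteq> al i")
        case True
        then have "card (al i) \<ge> h + 1" using loser_card[OF nW _ _ fin] by blast
        then have "(1 - m) * card (al i) \<ge> (1 - m) * real (h + 1)"
          using m_props by (intro mult_left_mono) auto
        then have c2: "real h \<le> (1 - m) * card (al i)" using m_props(3) by simp
        have vh: "vv k i (al i) = real h" by (simp only: vv_def if_not_P[OF nW] if_P[OF True])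
        have if0: "(if i \<in> Wn then m else 0) = 0" using nW by simp
        show ?thesis unfolding if0 sp vh using c2 by simp
      next
        case False
        then show ?thesis using nW sp m_props unfolding vv_def by auto
      qed
    qed
  qed (use m_props in auto)
  also have "\<dots> = m * card (S \<inter> Wn) + (1 - m) * k"
    using sum_if_card[OF \<open>finite S\<close>, of Wn m] by simp
  finally show "(\<Sum>i\<in>S. vv k i (al i)) \<le> m * card (S \<inter> Wn) + (1 - m) * k" .
qed

lemma wS_le_M:
  assumes "S \<subseteq> N"
  shows "wval Wn (vv k) S \<le> card (S \<inter> Bs) + h"
proof (rule wval_le)
  show "finite S" by (rule finite_subset[OF assms finite_bidders])
  show "finite Wn" by simp
  fix al assume feas: "feasible Wn S al"
  have "(\<Sum>i\<in>S. vv k i (al i)) \<le> (\<Sum>i\<in>S. if i \<in> Bs then 1 else 0) + (\<Sum>t\<in>Wn. if t \<in> Hs then 1 else 0)"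
  proof (rule price_bound[OF \<open>finite S\<close> _ feas])
    fix i assume iS: "i \<in> S"
    have sub: "al i \<subseteq> Wn" using feas iS unfolding feasible_def by blast
    have fin: "finite (al i)" by (rule finite_subset[OF sub]) simp
    have sp: "sum (\<lambda>t. if t \<in> Hs then 1 else 0) (al i) = real (card (al i \<inter> Hs))"
      using sum_if_card[OF fin, of Hs 1] by simp
    show "vv k i (al i) \<le> (if i \<in> Bs then 1 else 0) + sum (\<lambda>t. if t \<in> Hs then 1 else (0::real)) (al i)"
    proof (cases "i \<in> Wn")
      case True
      show ?thesis
      proof (cases "i \<in> Bs")
        case True
        then show ?thesis using sp unfolding vv_def by auto
      next
        case nB: False
        show ?thesis
        proof (cases "i \<in> al i")
          case True
          then have "i \<in> al i \<inter> Hs" using \<open>i \<in> Wn\<close> nB by auto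
          then have "card (al i \<inter> Hs) \<ge> 1" using fin by (metis One_nat_def Suc_leI card_gt_0_iff empty_iff finite_Int)
          then show ?thesis using \<open>i \<in> Wn\<close> nB True sp unfolding vv_def by simp
        next
          case False
          then show ?thesis using \<open>i \<in> Wn\<close> nB sp unfolding vv_def by simp
        qed
      qed
    next
      case nW: False
      then have nB: "i \<notin> Bs" by auto
      show ?thesis
      proof (cases "i - k \<in> Bs \<and> Hs \<union> {i - k} \<subseteq> al i")
        case True
        then have "Hs \<subseteq> al i \<inter> Hs" by auto
        then have "card Hs \<le> card (al i \<inter> Hs)" using fin by (intro card_mono) auto
        then show ?thesis using nW nB True sp unfolding vv_def by simp
      next
        case False
        then show ?thesis using nW nB sp unfolding vv_def by auto
      qed
    qed
  qed auto
  also have "\<dots> = card (S \<inter> Bs) + h"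
  proof -
    have "(\<Sum>i\<in>S. if i \<in> Bs then 1 else (0::real)) = card (S \<inter> Bs)"
      using sum_if_card[OF \<open>finite S\<close>, of Bs 1] by simp
    moreover have "(\<Sum>t\<in>Wn. if t \<in> Hs then 1 else (0::real)) = h"
    proof -
      have "(\<Sum>t\<in>Wn. if t \<in> Hs then 1 else (0::real)) = card (Wn \<inter> Hs)"
        using sum_if_card[of Wn Hs 1] by simp
      moreover have "Wn \<inter> Hs = Hs" using hk by auto
      ultimately show ?thesis by (simp only: card_atLeastAtMost)
    qed
    ultimately show ?thesis by simp
  qed
  finally show "(\<Sum>i\<in>S. vv k i (al i)) \<le> card (S \<inter> Bs) + h" .
qed

end


context
  fixes k :: nat
  assumes k1: "k \<ge> 1"
begin

abbreviation "hG \<equiv> hh k"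
abbreviation "mG \<equiv> 1 / real (hh k + 1)"
abbreviation "NG \<equiv> bidders (2 * k)"
abbreviation "WG \<equiv> {1..k}"
abbreviation "BG \<equiv> {hh k + 1..k}"
abbreviation "HG \<equiv> {1..hh k}"

lemma vv_empty: "vv k i {} = 0" unfolding vv_def by auto

lemma isCA: "is_CA (2 * k) WG (vv k)"
  unfolding is_CA_def using vv_empty by (auto simp: vv_def)

lemma feas_aa: "feasible WG NG (aa k)"
  unfolding feasible_def aa_def by auto

lemma sum_aa: "(\<Sum>i\<in>NG. vv k i (aa k i)) = k"
proof -
  have "(\<Sum>i\<in>NG. vv k i (aa k i)) = (\<Sum>i\<in>NG. if i \<in> WG then 1 else 0)"
    by (rule sum.cong) (auto simp: vv_def aa_def)
  also have "\<dots> = card (NG \<inter> WG)" using sum_if_card[of NG WG 1] by simp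
  also have "\<dots> = k" using card_Wn_N[OF k1] by simp
  finally show ?thesis .
qed

lemma wN: "wval WG (vv k) NG = k"
proof (rule antisym)
  have "wval WG (vv k) NG \<le> mG * card (NG \<inter> WG) + (1 - mG) * k" by (rule wS_le_B[OF k1]) simp
  also have "\<dots> = k" using card_Wn_N[OF k1] by (simp add: algebra_simps)
  finally show "wval WG (vv k) NG \<le> k" .
  show "real k \<le> wval WG (vv k) NG" using wval_ge[OF _ _ feas_aa, of "vv k"] sum_aa by simp
qed

lemma opt: "opt_alloc (2 * k) WG (vv k) (aa k)"
  unfolding opt_alloc_def using feas_aa sum_aa wN by simp

lemma winners_eq: "winners (2 * k) (aa k) = WG"
  unfolding winners_def aa_def bidders_def by auto

lemma core_loser0:
  assumes "\<pi> \<in> core (2 * k) WG (vv k)" "i \<in> NG - WG"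
  shows "\<pi> i = 0"
  by (rule core_zero[OF isCA opt assms(1)]) (use assms(2) in \<open>auto simp: aa_def vv_empty\<close>)

lemma xB_core: "xB k \<in> core (2 * k) WG (vv k)"
  unfolding core_def
proof (intro CollectI conjI ballI allI impI)
  fix i assume "i \<notin> NG" then show "xB k i = 0" unfolding xB_def bidders_def by auto
next
  fix i show "xB k i \<ge> 0" unfolding xB_def by simp
next
  fix S assume SN: "S \<subseteq> NG"
  define c1 where "c1 = card ((NG - S) \<inter> WG)"
  define c2 where "c2 = card (S \<inter> WG)"
  have s1: "(\<Sum>i\<in>NG - S. xB k i) = mG * c1"
    unfolding xB_def c1_def by (rule sum_if_card) simp
  have ck: "c1 + c2 = k"
  proof -
    have "(NG - S) \<inter> WG = WG - S" "S \<inter> WG = WG \<inter> S" using WnN[OF k1] by auto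
    moreover have "card WG = card (WG \<inter> S) + card (WG - S)" by (rule card_Int_Diff) simp
    ultimately show ?thesis unfolding c1_def c2_def by simp
  qed
  have ck': "real c1 + real c2 = real k" using ck by (metis of_nat_add)
  have w: "wval WG (vv k) S \<le> mG * c2 + (1 - mG) * k" unfolding c2_def by (rule wS_le_B[OF k1 SN])
  have "mG * c1 + mG * c2 = mG * k" using ck' by (metis distrib_left)
  then have "(\<Sum>i\<in>NG - S. xB k i) \<le> mG * k + (1 - mG) * k - wval WG (vv k) S"
    using s1 w by linarith
  then show "(\<Sum>i\<in>NG - S. xB k i) \<le> wval WG (vv k) NG - wval WG (vv k) S"
    using wN by (simp add: algebra_simps)
qed

lemma xM_core: "xM k \<in> core (2 * k) WG (vv k)"
  unfolding core_def
proof (intro CollectI conjI ballI allI impI)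
  fix i assume "i \<notin> NG" then show "xM k i = 0" unfolding xM_def bidders_def by auto
next
  fix i show "xM k i \<ge> 0" unfolding xM_def by simp
next
  fix S assume SN: "S \<subseteq> NG"
  have BN: "BG \<subseteq> NG" unfolding bidders_def by auto
  have "(\<Sum>i\<in>NG - S. xM k i) = card ((NG - S) \<inter> BG)"
    unfolding xM_def using sum_if_card[of "NG - S" BG 1] by simp
  moreover have "card ((NG - S) \<inter> BG) + card (S \<inter> BG) = k - hG"
  proof -
    have "(NG - S) \<inter> BG = BG - S" "S \<inter> BG = BG \<inter> S" using BN by auto
    moreover have "card BG = k - hG" by simp
    moreover have "card BG = card (BG \<inter> S) + card (BG - S)" by (rule card_Int_Diff) simp
    ultimately show ?thesis by simp
  qed
  moreover have "wval WG (vv k) S \<le> card (S \<inter> BG) + hG" by (rule wS_le_M[OF k1 SN])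
  moreover have "hG \<le> k" using hk[OF k1] by simp
  ultimately show "(\<Sum>i\<in>NG - S. xM k i) \<le> wval WG (vv k) NG - wval WG (vv k) S"
    using wN by (simp add: of_nat_diff)
qed

end


lemma all_eq_from_sum:
  fixes f :: "nat \<Rightarrow> real"
  assumes "finite T" "\<forall>t\<in>T. f t \<ge> c" "sum f T \<le> real (card T) * c"
  shows "\<forall>t\<in>T. f t = c"
proof -
  have "(\<Sum>t\<in>T. f t - c) = sum f T - real (card T) * c" by (simp add: sum_subtractf)
  then have le: "(\<Sum>t\<in>T. f t - c) \<le> 0" using assms(3) by simp
  have nn: "\<forall>t\<in>T. f t - c \<ge> 0" using assms(2) by simp
  then have "(\<Sum>t\<in>T. f t - c) \<ge> 0" by (simp add: sum_nonneg)
  then have "(\<Sum>t\<in>T. f t - c) = 0" using le by simp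
  moreover have "(\<Sum>t\<in>T. f t - c) = 0 \<longleftrightarrow> (\<forall>t\<in>T. f t - c = 0)"
    by (rule sum_nonneg_eq_0_iff[OF assms(1)]) (use nn in simp)
  ultimately have "\<forall>t\<in>T. f t - c = 0" by simp
  then show ?thesis by simp
qed

context
  fixes k :: nat
  assumes k1: "k \<ge> 1"
begin

abbreviation "hK \<equiv> hh k"
abbreviation "mK \<equiv> 1 / real (hh k + 1)"
abbreviation "NK \<equiv> bidders (2 * k)"
abbreviation "WK \<equiv> {1..k}"
abbreviation "BK \<equiv> {hh k + 1..k}"
abbreviation "HK \<equiv> {1..hh k}"

lemma wSb:
  assumes bB: "b \<in> BK"
  shows "wval WK (vv k) (NK - (HK \<union> {b})) \<ge> real k - 1"
proof -
  define S where "S = NK - (HK \<union> {b})"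
  define al where "al = (\<lambda>i. if i \<in> BK - {b} then {i} else if i = k + b then HK \<union> {b} else {})"
  have hk': "hK < k" by (rule hk[OF k1])
  have b1: "hK + 1 \<le> b" "b \<le> k" using bB by auto
  have feas: "feasible WK S al"
    unfolding feasible_def al_def using b1 by auto
  have g: "vv k i (al i) = (if i \<in> BK - {b} then 1 else 0) + (if i = k + b then real hK else 0)" if "i \<in> S" for i
  proof (cases "i \<in> BK - {b}")
    case True
    then have "i \<in> WK" "i \<noteq> k + b" using b1 by auto
    then show ?thesis using True unfolding al_def vv_def by simp
  next
    case nB: False
    show ?thesis
    proof (cases "i = k + b")
      case True
      then have "i \<notin> WK" "i - k = b" using b1 by auto
      then show ?thesis using True nB bB unfolding al_def vv_def by auto
    next
      case False
      then have "al i = {}" using nB unfolding al_def by simp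
      then show ?thesis using nB False by (simp add: vv_empty[OF k1])
    qed
  qed
  have finS: "finite S" unfolding S_def by simp
  have "(\<Sum>i\<in>S. vv k i (al i)) = (\<Sum>i\<in>S. (if i \<in> BK - {b} then 1 else 0) + (if i = k + b then real hK else 0))"
    by (rule sum.cong[OF refl]) (rule g)
  also have "\<dots> = (\<Sum>i\<in>S. if i \<in> BK - {b} then 1 else 0) + (\<Sum>i\<in>S. if i = k + b then real hK else 0)"
    by (rule sum.distrib)
  also have "(\<Sum>i\<in>S. if i \<in> BK - {b} then 1 else (0::real)) = card (S \<inter> (BK - {b}))"
    using sum_if_card[OF finS, of "BK - {b}" 1] by simp
  also have "S \<inter> (BK - {b}) = BK - {b}" unfolding S_def bidders_def by auto
  also have "(\<Sum>i\<in>S. if i = k + b then real hK else 0) = real hK"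
  proof -
    have "k + b \<in> S" unfolding S_def bidders_def using b1 by auto
    then show ?thesis using finS by (simp add: sum.delta')
  qed
  also have "card (BK - {b}) = k - hK - 1" using bB by simp
  finally have "(\<Sum>i\<in>S. vv k i (al i)) = real (k - hK - 1) + real hK" .
  also have "\<dots> = real k - 1" using hk' by (simp add: of_nat_diff)
  finally have "(\<Sum>i\<in>S. vv k i (al i)) = real k - 1" .
  moreover have "(\<Sum>i\<in>S. vv k i (al i)) \<le> wval WK (vv k) S" by (rule wval_ge[OF finS _ feas]) simp
  ultimately show ?thesis unfolding S_def by simp
qed

lemma constraint_b:
  assumes pc: "\<pi> \<in> core (2 * k) WK (vv k)" and bB: "b \<in> BK"
  shows "sum \<pi> HK + \<pi> b \<le> 1"
proof -
  have sub: "NK - (HK \<union> {b}) \<subseteq> NK" by blast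
  have "sum \<pi> (NK - (NK - (HK \<union> {b}))) \<le> wval WK (vv k) NK - wval WK (vv k) (NK - (HK \<union> {b}))"
    using pc sub unfolding core_def by blast
  moreover have "NK - (NK - (HK \<union> {b})) = HK \<union> {b}" using bB unfolding bidders_def by auto
  moreover have "sum \<pi> (HK \<union> {b}) = sum \<pi> HK + \<pi> b" using bB by simp
  ultimately show ?thesis using wSb[OF bB] wN[OF k1] by simp
qed

lemma sum_N_W:
  assumes pc: "\<pi> \<in> core (2 * k) WK (vv k)"
  shows "sum \<pi> NK = sum \<pi> WK"
proof (rule sum.mono_neutral_right)
  show "finite NK" by simp
  show "WK \<subseteq> NK" by (rule WnN[OF k1])
  show "\<forall>i\<in>NK - WK. \<pi> i = 0"
  proof
    fix i assume "i \<in> NK - WK" then show "\<pi> i = 0" by (rule core_loser0[OF k1 pc])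
  qed
qed

lemma MRC: "is_MRC (2 * k) WK (vv k) (xM k)"
  unfolding is_MRC_def
proof (intro conjI ballI)
  show "xM k \<in> core (2 * k) WK (vv k)" by (rule xM_core[OF k1])
  fix \<pi> assume pc: "\<pi> \<in> core (2 * k) WK (vv k)"
  have hk': "hK < k" by (rule hk[OF k1])
  have pos: "\<forall>i\<in>NK. \<pi> i \<ge> 0" using pc unfolding core_def by blast
  have posH: "sum \<pi> HK \<ge> 0" using pos hk' unfolding bidders_def by (intro sum_nonneg) auto
  have WHB: "WK = HK \<union> BK" using hk' by auto
  have "sum \<pi> WK = sum \<pi> HK + sum \<pi> BK" unfolding WHB by (rule sum.union_disjoint) auto
  moreover have "(\<Sum>b\<in>BK. sum \<pi> HK + \<pi> b) \<le> (\<Sum>b\<in>BK. 1)"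
    by (rule sum_mono) (rule constraint_b[OF pc])
  moreover have "(\<Sum>b\<in>BK. sum \<pi> HK + \<pi> b) = real (k - hK) * sum \<pi> HK + sum \<pi> BK"
    by (simp add: sum.distrib)
  moreover have "(\<Sum>b\<in>BK. (1::real)) = real (k - hK)" by simp
  moreover have "real (k - hK) \<ge> 1" using hk' by simp
  moreover have "sum \<pi> HK \<le> real (k - hK) * sum \<pi> HK"
    using mult_right_mono[OF \<open>real (k - hK) \<ge> 1\<close> posH] by simp
  ultimately have "sum \<pi> WK \<le> real (k - hK)" by linarith
  moreover have "sum (xM k) NK = real (k - hK)"
  proof -
    have "sum (xM k) NK = real (card (NK \<inter> BK))"
      unfolding xM_def using sum_if_card[of NK BK 1] by simp
    moreover have "NK \<inter> BK = BK" unfolding bidders_def by auto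
    ultimately show ?thesis by simp
  qed
  ultimately show "(\<Sum>i\<in>NK. \<pi> i) \<le> (\<Sum>i\<in>NK. xM k i)" using sum_N_W[OF pc] by simp
qed

end


context
  fixes k :: nat
  assumes k1: "k \<ge> 1"
begin

abbreviation "hL \<equiv> hh k"
abbreviation "mL \<equiv> 1 / real (hh k + 1)"
abbreviation "NL \<equiv> bidders (2 * k)"
abbreviation "WL \<equiv> {1..k}"
abbreviation "BL \<equiv> {hh k + 1..k}"
abbreviation "HL \<equiv> {1..hh k}"

lemma BLO: "is_BLO (2 * k) WL (vv k) (xB k)"
  unfolding is_BLO_def
proof (intro conjI notI)
  show xc: "xB k \<in> core (2 * k) WL (vv k)" by (rule xB_core[OF k1])
  assume "\<exists>\<pi>'\<in>core (2 * k) WL (vv k). leximin_dominates (2 * k) \<pi>' (xB k)"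
  then obtain \<pi> where pc: "\<pi> \<in> core (2 * k) WL (vv k)" and dom: "leximin_dominates (2 * k) \<pi> (xB k)"
    by blast
  obtain r where r: "r < 2 * k" "\<forall>t<r. sorted_entries (2 * k) \<pi> ! t = sorted_entries (2 * k) (xB k) ! t"
    "sorted_entries (2 * k) \<pi> ! r > sorted_entries (2 * k) (xB k) ! r"
    using dom unfolding leximin_dominates_def by blast
  have hk': "hL < k" by (rule hk[OF k1])
  have WN: "WL \<subseteq> NL" by (rule WnN[OF k1])
  have posP: "\<forall>i\<in>NL. \<pi> i \<ge> 0" using pc unfolding core_def by blast
  have posB: "\<forall>i\<in>NL. xB k i \<ge> 0" unfolding xB_def by simp
  have cardL: "card (NL - WL) = k"
  proof -
    have "card (NL - WL) = card NL - card WL" by (rule card_Diff_subset) (use WN in auto)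
    then show ?thesis unfolding bidders_def by simp
  qed
  have loss0: "\<pi> i = 0" if "i \<in> NL - WL" for i by (rule core_loser0[OF k1 pc that])
  have mpos: "mL > 0" by simp
  have F1: "sorted_entries (2 * k) \<pi> ! t \<le> 0" if "t < k" for t
  proof (rule sorted_nth_le_count)
    show "sorted (sorted_entries (2 * k) \<pi>)" by simp
    show "t < length (sorted_entries (2 * k) \<pi>)" using that by simp
    have "NL - WL \<subseteq> {i\<in>NL. \<pi> i \<le> 0}" using loss0 by auto
    then have "card (NL - WL) \<le> card {i\<in>NL. \<pi> i \<le> 0}" by (intro card_mono) auto
    then show "t < length (filter (\<lambda>z. z \<le> 0) (sorted_entries (2 * k) \<pi>))"
      unfolding count_se using cardL that by simp
  qed
  have F2: "sorted_entries (2 * k) (xB k) ! t \<ge> 0" if "t < 2 * k" for t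
    by (rule se_nonneg[OF posB that])
  have F3: "sorted_entries (2 * k) (xB k) ! k \<ge> mL"
  proof (rule sorted_nth_ge_count)
    show "sorted (sorted_entries (2 * k) (xB k))" by simp
    show "k < length (sorted_entries (2 * k) (xB k))" using k1 by simp
    have "{i\<in>NL. xB k i < mL} = NL - WL" unfolding xB_def by auto
    then show "length (filter (\<lambda>z. z < mL) (sorted_entries (2 * k) (xB k))) \<le> k"
      unfolding count_se using cardL by simp
  qed
  show False
  proof (cases "\<forall>i\<in>WL. \<pi> i \<ge> mL")
    case True
    have eqW: "\<pi> i = mL" if iW: "i \<in> WL" for i
    proof -
      define b where "b = (if i \<in> BL then i else k)"
      have bB: "b \<in> BL" unfolding b_def using hk' by auto
      define T where "T = HL \<union> {b}"
      have iT: "i \<in> T" unfolding T_def b_def using iW by auto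
      have TW: "T \<subseteq> WL" unfolding T_def using bB by auto
      have bH: "b \<notin> HL" using bB by auto
      have cT: "card T = hL + 1" unfolding T_def using bH by simp
      have "sum \<pi> T = sum \<pi> HL + \<pi> b" unfolding T_def using bH by simp
      also have "\<dots> \<le> 1" by (rule constraint_b[OF k1 pc bB])
      also have "1 = real (card T) * mL" using cT by simp
      finally have sT: "sum \<pi> T \<le> real (card T) * mL" .
      have "\<forall>t\<in>T. \<pi> t = mL"
        by (rule all_eq_from_sum) (use sT TW True T_def in auto)
      then show ?thesis using iT by blast
    qed
    have "\<forall>i\<in>NL. \<pi> i = xB k i"
    proof
      fix i assume iN: "i \<in> NL"
      show "\<pi> i = xB k i"
      proof (cases "i \<in> WL")
        case True then show ?thesis using eqW unfolding xB_def by simp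
      next
        case False then show ?thesis using loss0 iN unfolding xB_def by simp
      qed
    qed
    then have "map \<pi> [1..<2 * k + 1] = map (xB k) [1..<2 * k + 1]"
    proof (intro map_cong[OF refl])
      fix i assume "i \<in> set [1..<2 * k + 1]"
      then have "i \<in> NL" unfolding bidders_def by auto
      then show "\<pi> i = xB k i" using \<open>\<forall>i\<in>NL. \<pi> i = xB k i\<close> by blast
    qed
    then have "sorted_entries (2 * k) \<pi> = sorted_entries (2 * k) (xB k)"
      unfolding sorted_entries_def by (rule arg_cong[where f = sort])
    then show False using r(3) by simp
  next
    case False
    then obtain w0 where w0: "w0 \<in> WL" "\<pi> w0 < mL" by (auto simp: not_le)
    have F4: "sorted_entries (2 * k) \<pi> ! k < mL"
    proof (rule sorted_nth_less_count)
      show "sorted (sorted_entries (2 * k) \<pi>)" by simp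
      show "k < length (sorted_entries (2 * k) \<pi>)" using k1 by simp
      have "insert w0 (NL - WL) \<subseteq> {i\<in>NL. \<pi> i < mL}" using loss0 w0 WN by auto
      then have "card (insert w0 (NL - WL)) \<le> card {i\<in>NL. \<pi> i < mL}" by (intro card_mono) auto
      moreover have "card (insert w0 (NL - WL)) = k + 1" using cardL w0(1) by simp
      ultimately show "k < length (filter (\<lambda>z. z < mL) (sorted_entries (2 * k) \<pi>))"
        unfolding count_se by simp
    qed
    show False
    proof (cases "r < k")
      case True
      then show False using F1[OF True] F2[OF r(1)] r(3) by simp
    next
      case nrk: False
      show False
      proof (cases "r = k")
        case True then show False using F3 F4 r(3) by simp
      next
        case False
        then have "k < r" using nrk by simp
        then have "sorted_entries (2 * k) \<pi> ! k = sorted_entries (2 * k) (xB k) ! k" using r(2) by blast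
        then show False using F3 F4 by simp
      qed
    qed
  qed
qed

lemma final_eq: "(\<Sum>i\<in>NL. xB k i) = blo_factor k * (\<Sum>i\<in>NL. xM k i)"
proof -
  have "(\<Sum>i\<in>NL. xB k i) = mL * card (NL \<inter> WL)" unfolding xB_def by (rule sum_if_card) simp
  also have "card (NL \<inter> WL) = k" by (rule card_Wn_N[OF k1])
  finally have sB: "(\<Sum>i\<in>NL. xB k i) = mL * k" .
  have "(\<Sum>i\<in>NL. xM k i) = real (card (NL \<inter> BL))"
    unfolding xM_def using sum_if_card[of NL BL 1] by simp
  also have "NL \<inter> BL = BL" unfolding bidders_def by auto
  finally have sM: "(\<Sum>i\<in>NL. xM k i) = real (k - hL)" by simp
  have "mL * k = blo_factor k * real (k - hL)"
  proof (cases "even k")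
    case True
    then obtain a where a: "k = 2 * a" by blast
    have a1: "a \<ge> 1" using a k1 by simp
    have h: "hL = a - 1" unfolding hh_def a by simp
    have km: "k mod 2 = 0" using True by simp
    have rq: "real (k - hL) = real a + 1" using h a a1 by (simp add: of_nat_diff)
    have rh: "real (hL + 1) = real a" using h a1 by simp
    have rk: "real k = 2 * real a" using a by simp
    have bf: "blo_factor k = 4 / (2 * real a + 2)" unfolding blo_factor_def km a by simp
    have e1: "mL * real k = 2" unfolding rh rk using a1 by simp
    have e2: "blo_factor k * real (k - hL) = 2" unfolding bf rq by (simp add: field_simps)
    show ?thesis by (simp only: e1 e2)
  next
    case False
    then obtain a where a: "k = 2 * a + 1" using oddE by blast
    have h: "hL = a" unfolding hh_def a by simp
    have km: "k mod 2 = 1" using False by presburger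
    have rq: "real (k - hL) = real a + 1" using h a by simp
    have rh: "real (hL + 1) = real a + 1" using h by simp
    have rk: "real k = 2 * real a + 1" using a by simp
    have bf0: "blo_factor k = 4 / (real k + 2 + 1 / real k)" unfolding blo_factor_def using km by simp
    have den: "real k + 2 + 1 / real k = 4 * (real a + 1)^2 / (2 * real a + 1)"
      unfolding rk by (simp add: field_simps power2_eq_square)
    have bf: "blo_factor k = (2 * real a + 1) / (real a + 1)^2" unfolding bf0 den by (simp add: field_simps)
    have e1: "mL * real k = (2 * real a + 1) / (real a + 1)" unfolding rh rk by simp
    have e2: "blo_factor k * real (k - hL) = (2 * real a + 1) / (real a + 1)"
      unfolding bf rq by (simp add: power2_eq_square)
    show ?thesis by (simp only: e1 e2)
  qed
  then show ?thesis using sB sM by simp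
qed

lemma sM_pos: "(\<Sum>i\<in>NL. xM k i) > 0"
proof -
  have "(\<Sum>i\<in>NL. xM k i) = real (card (NL \<inter> BL))"
    unfolding xM_def using sum_if_card[of NL BL 1] by simp
  also have "NL \<inter> BL = BL" unfolding bidders_def by auto
  finally show ?thesis using hk[OF k1] by simp
qed

end

theorem theorem3:
  shows "(\<forall>n (M::'m set) v a pBLO pMRC.
            is_CA n M v \<and> opt_alloc n M v a \<and> winners n a \<noteq> {} \<and>
            is_BLO n M v pBLO \<and> is_MRC n M v pMRC \<longrightarrow>
            (\<Sum>i\<in>bidders n. pBLO i) \<ge> blo_factor (card (winners n a)) * (\<Sum>i\<in>bidders n. pMRC i))
       \<and> (\<forall>k::nat. k \<ge> 1 \<longrightarrow>
            (\<exists>n (M::nat set) v a pBLO pMRC.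
               is_CA n M v \<and> opt_alloc n M v a \<and> card (winners n a) = k \<and>
               is_BLO n M v pBLO \<and> is_MRC n M v pMRC \<and>
               (\<Sum>i\<in>bidders n. pMRC i) > 0 \<and>
               (\<Sum>i\<in>bidders n. pBLO i) = blo_factor k * (\<Sum>i\<in>bidders n. pMRC i)))"
proof (intro conjI allI impI)
  fix n and M :: "'m set" and v a pBLO pMRC
  assume H: "is_CA n M v \<and> opt_alloc n M v a \<and> winners n a \<noteq> {} \<and>
            is_BLO n M v pBLO \<and> is_MRC n M v pMRC"
  then have "blo_factor (card (winners n a)) * (\<Sum>i\<in>bidders n. pMRC i) \<le> (\<Sum>i\<in>bidders n. pBLO i)"
    by (intro part1) auto
  then show "(\<Sum>i\<in>bidders n. pBLO i) \<ge> blo_factor (card (winners n a)) * (\<Sum>i\<in>bidders n. pMRC i)"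
    by simp
next
  fix k :: nat assume k1: "k \<ge> 1"
  have c: "card (winners (2 * k) (aa k)) = k" using winners_eq[OF k1] by simp
  show "\<exists>n (M::nat set) v a pBLO pMRC.
               is_CA n M v \<and> opt_alloc n M v a \<and> card (winners n a) = k \<and>
               is_BLO n M v pBLO \<and> is_MRC n M v pMRC \<and>
               (\<Sum>i\<in>bidders n. pMRC i) > 0 \<and>
               (\<Sum>i\<in>bidders n. pBLO i) = blo_factor k * (\<Sum>i\<in>bidders n. pMRC i)"
    apply (rule exI[of _ "2 * k"], rule exI[of _ "{1..k}"], rule exI[of _ "vv k"],
           rule exI[of _ "aa k"], rule exI[of _ "xB k"], rule exI[of _ "xM k"])
    apply (intro conjI)
          apply (rule isCA[OF k1])
         apply (rule opt[OF k1])
        apply (rule c)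
       apply (rule BLO[OF k1])
      apply (rule MRC[OF k1])
     apply (rule sM_pos[OF k1])
    apply (rule final_eq[OF k1])
    done
qed

end
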